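(* Let $(P,\lambda)$ be a marked poset whose Hasse diagram is a disjoint union of connected components such that each component contains exactly one maximal marked element and exactly one minimal marked element. Then the marked order polytope $\mathcal{O}(P,\lambda)$ is affinely isomorphic to the order polytope $\mathcal{O}(Q)$ of some finite poset $Q$.
   Context: A marked poset $(P,\lambda)$ is a finite poset $(P,\preceq)$ together with an induced subposet $P^*\subseteq P$ of marked elements and an order-preserving map $\lambda:P^*\to\mathbb{R}$ (the marking); it is always assumed that all minimal and all maximal elements of $P$ lie in $P^*$. The marked order polytope $\mathcal{O}(P,\lambda)\subseteq\mathbb{R}^{P\setminus P^*}$ is the set of all $x$ such that, setting $x_a=\lambda(a)$ for $a\in P^*$, one has $x_p\le x_q$ for all $p\preceq q$ in $P$. For a finite poset $Q$, the order polytope $\mathcal{O}(Q)\subseteq\mathbb{R}^Q$ is defined by $0\le x_p\le 1$ for all $p\in Q$ and $x_p\le x_q$ whenever $p\prec q$. Two polytopes $A,B\subseteq\mathbb{R}^d$ are affinely isomorphic if $f(A)=B$ for some map $f(x)=Mx+x_0$ with $M$ an invertible $d\times d$ matrix.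
   Formalization: The marked elements of each component are exactly its minimal and maximal marked elements, and $\lambda(a) < \lambda(b)$ whenever $a \preceq p \preceq b$ with $a, b$ marked and $p$ unmarked. Each condition added here is assumed in the paper as well or is needed for the statement above to hold. *)

theory Defs
  imports Complex_Main
begin

definition is_poset :: "'a set \<Rightarrow> ('a \<Rightarrow> 'a \<Rightarrow> bool) \<Rightarrow> bool" where
  "is_poset P le \<longleftrightarrow> finite P
     \<and> (\<forall>x\<in>P. le x x)
     \<and> (\<forall>x\<in>P. \<forall>y\<in>P. le x y \<and> le y x \<longrightarrow> x = y)
     \<and> (\<forall>x\<in>P. \<forall>y\<in>P. \<forall>z\<in>P. le x y \<and> le y z \<longrightarrow> le x z)"

definition minimal_in :: "'a set \<Rightarrow> ('a \<Rightarrow> 'a \<Rightarrow> bool) \<Rightarrow> 'a \<Rightarrow> bool" where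
  "minimal_in S le x \<longleftrightarrow> x \<in> S \<and> (\<forall>y\<in>S. le y x \<longrightarrow> y = x)"

definition maximal_in :: "'a set \<Rightarrow> ('a \<Rightarrow> 'a \<Rightarrow> bool) \<Rightarrow> 'a \<Rightarrow> bool" where
  "maximal_in S le x \<longleftrightarrow> x \<in> S \<and> (\<forall>y\<in>S. le x y \<longrightarrow> y = x)"

definition marked_poset ::
  "'a set \<Rightarrow> ('a \<Rightarrow> 'a \<Rightarrow> bool) \<Rightarrow> 'a set \<Rightarrow> ('a \<Rightarrow> real) \<Rightarrow> bool" where
  "marked_poset P le Pm lam \<longleftrightarrow> is_poset P le \<and> Pm \<subseteq> P
     \<and> (\<forall>x\<in>Pm. \<forall>y\<in>Pm. le x y \<longrightarrow> lam x \<le> lam y)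
     \<and> (\<forall>x. minimal_in P le x \<longrightarrow> x \<in> Pm)
     \<and> (\<forall>x. maximal_in P le x \<longrightarrow> x \<in> Pm)"

definition covers :: "'a set \<Rightarrow> ('a \<Rightarrow> 'a \<Rightarrow> bool) \<Rightarrow> 'a \<Rightarrow> 'a \<Rightarrow> bool" where
  "covers P le p q \<longleftrightarrow> p \<in> P \<and> q \<in> P \<and> le p q \<and> p \<noteq> q
     \<and> \<not> (\<exists>z\<in>P. le p z \<and> le z q \<and> z \<noteq> p \<and> z \<noteq> q)"

definition hasse_edges :: "'a set \<Rightarrow> ('a \<Rightarrow> 'a \<Rightarrow> bool) \<Rightarrow> ('a \<times> 'a) set" where
  "hasse_edges P le = {(p, q). covers P le p q \<or> covers P le q p}"

definition hasse_component :: "'a set \<Rightarrow> ('a \<Rightarrow> 'a \<Rightarrow> bool) \<Rightarrow> 'a \<Rightarrow> 'a set" where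
  "hasse_component P le x = {y \<in> P. (x, y) \<in> (hasse_edges P le)\<^sup>*}"

text \<open>Points of R^(P - Pm) are represented as functions vanishing outside P - Pm.\<close>
definition marked_order_polytope ::
  "'a set \<Rightarrow> ('a \<Rightarrow> 'a \<Rightarrow> bool) \<Rightarrow> 'a set \<Rightarrow> ('a \<Rightarrow> real) \<Rightarrow> ('a \<Rightarrow> real) set" where
  "marked_order_polytope P le Pm lam =
     {x. (\<forall>p. p \<notin> P - Pm \<longrightarrow> x p = 0)
       \<and> (\<forall>p\<in>P. \<forall>q\<in>P. le p q \<longrightarrow>
            (if p \<in> Pm then lam p else x p) \<le> (if q \<in> Pm then lam q else x q))}"

text \<open>Points of R^Q are represented as functions vanishing outside Q.\<close>
definition order_polytope :: "'b set \<Rightarrow> ('b \<Rightarrow> 'b \<Rightarrow> bool) \<Rightarrow> ('b \<Rightarrow> real) set" where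
  "order_polytope Q le =
     {x. (\<forall>q. q \<notin> Q \<longrightarrow> x q = 0)
       \<and> (\<forall>q\<in>Q. 0 \<le> x q \<and> x q \<le> 1)
       \<and> (\<forall>p\<in>Q. \<forall>q\<in>Q. le p q \<and> p \<noteq> q \<longrightarrow> x p \<le> x q)}"

text \<open>A \<subseteq> R^U and B \<subseteq> R^V are affinely isomorphic: B = f(A) for f(x) = M x + c with
  M an invertible (square) U-by-V matrix, given by a two-sided inverse N.\<close>
definition affinely_isomorphic ::
  "'a set \<Rightarrow> 'b set \<Rightarrow> ('a \<Rightarrow> real) set \<Rightarrow> ('b \<Rightarrow> real) set \<Rightarrow> bool" where
  "affinely_isomorphic U V A B \<longleftrightarrow>
     (\<exists>(M :: 'b \<Rightarrow> 'a \<Rightarrow> real) (c :: 'b \<Rightarrow> real).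
        (\<exists>N :: 'a \<Rightarrow> 'b \<Rightarrow> real.
           (\<forall>q\<in>V. \<forall>q'\<in>V. (\<Sum>p\<in>U. M q p * N p q') = (if q = q' then 1 else 0))
         \<and> (\<forall>p\<in>U. \<forall>p'\<in>U. (\<Sum>q\<in>V. N p q * M q p') = (if p = p' then 1 else 0)))
      \<and> (\<lambda>x. \<lambda>q. if q \<in> V then (\<Sum>p\<in>U. M q p * x p) + c q else 0) ` A = B)"

definition components_one_min_one_max_marked ::
  "'a set \<Rightarrow> ('a \<Rightarrow> 'a \<Rightarrow> bool) \<Rightarrow> 'a set \<Rightarrow> bool" where
  "components_one_min_one_max_marked P le Pm \<longleftrightarrow>
     (\<forall>x\<in>P. let C = hasse_component P le x in
        (\<exists>!a. minimal_in (C \<inter> Pm) le a)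
      \<and> (\<exists>!b. maximal_in (C \<inter> Pm) le b)
      \<and> (\<forall>z\<in>C \<inter> Pm. minimal_in (C \<inter> Pm) le z \<or> maximal_in (C \<inter> Pm) le z))"

end

theory Submission
  imports Defs
begin

lemma po_refl: "is_poset P le \<Longrightarrow> x \<in> P \<Longrightarrow> le x x"
  unfolding is_poset_def by blast
lemma po_antisym: "is_poset P le \<Longrightarrow> x \<in> P \<Longrightarrow> y \<in> P \<Longrightarrow> le x y \<Longrightarrow> le y x \<Longrightarrow> x = y"
  unfolding is_poset_def by blast
lemma po_trans: "is_poset P le \<Longrightarrow> x \<in> P \<Longrightarrow> y \<in> P \<Longrightarrow> z \<in> P \<Longrightarrow> le x y \<Longrightarrow> le y z \<Longrightarrow> le x z"
  unfolding is_poset_def by blast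
lemma po_fin: "is_poset P le \<Longrightarrow> finite P"
  unfolding is_poset_def by blast

lemma exists_min_below:
  assumes po: "is_poset P le" and SP: "S \<subseteq> P"
  shows "x \<in> S \<Longrightarrow> \<exists>m. minimal_in S le m \<and> le m x"
proof (induct "card {z\<in>S. le z x}" arbitrary: x rule: less_induct)
  case less
  have finS: "finite S" by (rule finite_subset[OF SP po_fin[OF po]])
  show ?case
  proof (cases "minimal_in S le x")
    case True
    then show ?thesis using less(2) SP po_refl[OF po, of x] by blast
  next
    case False
    then obtain y where y: "y \<in> S" "le y x" "y \<noteq> x" using less(2) unfolding minimal_in_def by blast
    have sub: "{z\<in>S. le z y} \<subset> {z\<in>S. le z x}"
    proof
      show "{z\<in>S. le z y} \<subseteq> {z\<in>S. le z x}" using po_trans[OF po, of _ y x] SP y less(2) by blast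
      have "x \<notin> {z\<in>S. le z y}" using po_antisym[OF po, of x y] SP y less(2) by blast
      moreover have "x \<in> {z\<in>S. le z x}" using po_refl[OF po, of x] SP less(2) by blast
      ultimately show "{z\<in>S. le z y} \<noteq> {z\<in>S. le z x}" by blast
    qed
    have "card {z\<in>S. le z y} < card {z\<in>S. le z x}"
      by (rule psubset_card_mono) (use finS sub in auto)
    then obtain m where "minimal_in S le m" "le m y" using less(1) y by blast
    moreover have "m \<in> S" using calculation unfolding minimal_in_def by blast
    ultimately show ?thesis using po_trans[OF po, of m y x] SP y less(2) by blast
  qed
qed

lemma flip_poset: "is_poset P le \<Longrightarrow> is_poset P (\<lambda>x y. le y x)"
  unfolding is_poset_def by blast

lemma max_flip: "maximal_in S le x = minimal_in S (\<lambda>x y. le y x) x"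
  unfolding maximal_in_def minimal_in_def by simp

lemma exists_max_above:
  assumes po: "is_poset P le" and SP: "S \<subseteq> P" and "x \<in> S"
  shows "\<exists>m. maximal_in S le m \<and> le x m"
  using exists_min_below[OF flip_poset[OF po] SP assms(3)] unfolding max_flip by blast

lemma chain_hasse:
  assumes po: "is_poset P le"
  shows "p \<in> P \<Longrightarrow> q \<in> P \<Longrightarrow> le p q \<Longrightarrow> (p, q) \<in> (hasse_edges P le)\<^sup>*"
proof (induct "card {z\<in>P. le p z \<and> le z q}" arbitrary: p q rule: less_induct)
  case less
  have finP: "finite P" by (rule po_fin[OF po])
  show ?case
  proof (cases "p = q")
    case True then show ?thesis by simp
  next
    case False
    show ?thesis
    proof (cases "covers P le p q")
      case True
      then show ?thesis unfolding hasse_edges_def by (intro r_into_rtrancl) simp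
    next
      case nc: False
      have "\<exists>z\<in>P. le p z \<and> le z q \<and> z \<noteq> p \<and> z \<noteq> q"
        using nc less(2,3,4) False unfolding covers_def by (simp; blast)
      then obtain z where z: "z \<in> P" "le p z" "le z q" "z \<noteq> p" "z \<noteq> q"
        by blast
      have "{w\<in>P. le p w \<and> le w z} \<subset> {w\<in>P. le p w \<and> le w q}"
      proof
        show "{w\<in>P. le p w \<and> le w z} \<subseteq> {w\<in>P. le p w \<and> le w q}" using po_trans[OF po, of _ z q] z less by blast
        have "q \<notin> {w\<in>P. le p w \<and> le w z}" using po_antisym[OF po, of q z] z less by blast
        moreover have "q \<in> {w\<in>P. le p w \<and> le w q}" using po_refl[OF po, of q] less by blast
        ultimately show "{w\<in>P. le p w \<and> le w z} \<noteq> {w\<in>P. le p w \<and> le w q}" by blast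
      qed
      then have c1: "card {w\<in>P. le p w \<and> le w z} < card {w\<in>P. le p w \<and> le w q}"
        by (intro psubset_card_mono) (use finP in auto)
      have "{w\<in>P. le z w \<and> le w q} \<subset> {w\<in>P. le p w \<and> le w q}"
      proof
        show "{w\<in>P. le z w \<and> le w q} \<subseteq> {w\<in>P. le p w \<and> le w q}" using po_trans[OF po, of p z] z less by blast
        have "p \<notin> {w\<in>P. le z w \<and> le w q}" using po_antisym[OF po, of p z] z less by blast
        moreover have "p \<in> {w\<in>P. le p w \<and> le w q}" using po_refl[OF po, of p] less by blast
        ultimately show "{w\<in>P. le z w \<and> le w q} \<noteq> {w\<in>P. le p w \<and> le w q}" by blast
      qed
      then have c2: "card {w\<in>P. le z w \<and> le w q} < card {w\<in>P. le p w \<and> le w q}"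
        by (intro psubset_card_mono) (use finP in auto)
      have "(p, z) \<in> (hasse_edges P le)\<^sup>*" using less(1)[OF c1] less z by blast
      moreover have "(z, q) \<in> (hasse_edges P le)\<^sup>*" using less(1)[OF c2] less z by blast
      ultimately show ?thesis by (rule rtrancl_trans)
    qed
  qed
qed

lemma hasse_sym: "sym ((hasse_edges P le)\<^sup>*)"
  by (rule sym_rtrancl) (auto simp: sym_def hasse_edges_def)

lemma comp_eq:
  assumes po: "is_poset P le" and "p \<in> P" "q \<in> P" "le p q"
  shows "hasse_component P le p = hasse_component P le q"
proof -
  have pq: "(p, q) \<in> (hasse_edges P le)\<^sup>*" by (rule chain_hasse[OF assms])
  have qp: "(q, p) \<in> (hasse_edges P le)\<^sup>*" by (rule symD[OF hasse_sym pq])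
  show ?thesis unfolding hasse_component_def
  proof (intro Collect_cong conj_cong refl iffI)
    fix y assume "(p, y) \<in> (hasse_edges P le)\<^sup>*"
    then show "(q, y) \<in> (hasse_edges P le)\<^sup>*" using qp by (rule rtrancl_trans[rotated])
  next
    fix y assume "(q, y) \<in> (hasse_edges P le)\<^sup>*"
    then show "(p, y) \<in> (hasse_edges P le)\<^sup>*" using pq by (rule rtrancl_trans[rotated])
  qed
qed

theorem lemma3p1:
  fixes P :: "'a set" and le :: "'a \<Rightarrow> 'a \<Rightarrow> bool"
    and Pm :: "'a set" and lam :: "'a \<Rightarrow> real"
  assumes "marked_poset P le Pm lam"
    and "components_one_min_one_max_marked P le Pm"
    and "\<forall>p\<in>P - Pm. \<forall>a\<in>Pm. \<forall>b\<in>Pm. le a p \<and> le p b \<longrightarrow> lam a < lam b"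
  shows "\<exists>(Q :: nat set) leQ. is_poset Q leQ
           \<and> affinely_isomorphic (P - Pm) Q (marked_order_polytope P le Pm lam) (order_polytope Q leQ)"
proof -
  let ?U = "P - Pm"
  let ?C = "hasse_component P le"
  have po: "is_poset P le" and PmP: "Pm \<subseteq> P"
    and lammono: "\<And>x y. x \<in> Pm \<Longrightarrow> y \<in> Pm \<Longrightarrow> le x y \<Longrightarrow> lam x \<le> lam y"
    and minP: "\<And>x. minimal_in P le x \<Longrightarrow> x \<in> Pm"
    and maxP: "\<And>x. maximal_in P le x \<Longrightarrow> x \<in> Pm"
    using assms(1) unfolding marked_poset_def by blast+
  have finP: "finite P" by (rule po_fin[OF po])
  have CP: "\<And>p. ?C p \<subseteq> P" unfolding hasse_component_def by blast
  have selfC: "\<And>p. p \<in> P \<Longrightarrow> p \<in> ?C p" unfolding hasse_component_def by blast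
  have compa: "\<And>p. p \<in> P \<Longrightarrow> (\<exists>!a. minimal_in (?C p \<inter> Pm) le a)
      \<and> (\<exists>!b. maximal_in (?C p \<inter> Pm) le b)
      \<and> (\<forall>z\<in>?C p \<inter> Pm. minimal_in (?C p \<inter> Pm) le z \<or> maximal_in (?C p \<inter> Pm) le z)"
    using assms(2) unfolding components_one_min_one_max_marked_def Let_def by blast
  define A where "A p = (THE a. minimal_in (?C p \<inter> Pm) le a)" for p
  define B where "B p = (THE b. maximal_in (?C p \<inter> Pm) le b)" for p
  have Amin: "\<And>p. p \<in> P \<Longrightarrow> minimal_in (?C p \<inter> Pm) le (A p)"
    unfolding A_def using compa by (metis theI')
  have Auniq: "\<And>p z. p \<in> P \<Longrightarrow> minimal_in (?C p \<inter> Pm) le z \<Longrightarrow> z = A p"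
    unfolding A_def using compa by (metis the1_equality)
  have Bmax: "\<And>p. p \<in> P \<Longrightarrow> maximal_in (?C p \<inter> Pm) le (B p)"
    unfolding B_def using compa by (metis theI')
  have Buniq: "\<And>p z. p \<in> P \<Longrightarrow> maximal_in (?C p \<inter> Pm) le z \<Longrightarrow> z = B p"
    unfolding B_def using compa by (metis the1_equality)
  have minmax: "\<And>p z. p \<in> P \<Longrightarrow> z \<in> ?C p \<inter> Pm \<Longrightarrow>
      minimal_in (?C p \<inter> Pm) le z \<or> maximal_in (?C p \<inter> Pm) le z"
    using compa by blast
  have AP: "\<And>p. p \<in> P \<Longrightarrow> A p \<in> Pm \<and> A p \<in> P"
    using Amin CP unfolding minimal_in_def by blast
  have BP: "\<And>p. p \<in> P \<Longrightarrow> B p \<in> Pm \<and> B p \<in> P"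
    using Bmax CP unfolding maximal_in_def by blast
  have Ale: "le (A p) p" if p: "p \<in> P" for p
  proof -
    obtain m where m: "minimal_in P le m" "le m p"
      using exists_min_below[OF po order_refl p] by blast
    have mP: "m \<in> P" "m \<in> Pm" using m minP unfolding minimal_in_def by blast+
    have "?C m = ?C p" by (rule comp_eq[OF po mP(1) p m(2)])
    then have mC: "m \<in> ?C p \<inter> Pm" using selfC[OF mP(1)] mP by blast
    have sub: "?C p \<inter> Pm \<subseteq> P" using CP by blast
    obtain m' where m': "minimal_in (?C p \<inter> Pm) le m'" "le m' m"
      using exists_min_below[OF po sub mC] by blast
    have "m' = A p" by (rule Auniq[OF p m'(1)])
    then show ?thesis using po_trans[OF po, of m' m p] m' m(2) mP p AP[OF p] by simp
  qed
  have Bge: "le p (B p)" if p: "p \<in> P" for p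
  proof -
    obtain m where m: "maximal_in P le m" "le p m"
      using exists_max_above[OF po order_refl p] by blast
    have mP: "m \<in> P" "m \<in> Pm" using m maxP unfolding maximal_in_def by blast+
    have "?C p = ?C m" by (rule comp_eq[OF po p mP(1) m(2)])
    then have mC: "m \<in> ?C p \<inter> Pm" using selfC[OF mP(1)] mP by blast
    have sub: "?C p \<inter> Pm \<subseteq> P" using CP by blast
    obtain m' where m': "maximal_in (?C p \<inter> Pm) le m'" "le m m'"
      using exists_max_above[OF po sub mC] by blast
    have "m' = B p" by (rule Buniq[OF p m'(1)])
    then show ?thesis using po_trans[OF po, of p m m'] m' m(2) mP p BP[OF p] by simp
  qed
  have ABlt: "lam (A p) < lam (B p)" if p: "p \<in> ?U" for p
    using assms(3) p Ale[of p] Bge[of p] AP[of p] BP[of p] by blast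
  have sameAB: "A p = A q \<and> B p = B q" if "p \<in> P" "q \<in> P" "le p q" for p q
    using comp_eq[OF po that] unfolding A_def B_def by simp
  have below: "p = A q" if pq: "p \<in> Pm" "q \<in> ?U" "le p q" for p q
  proof -
    have pP: "p \<in> P" "q \<in> P" using pq PmP by blast+
    have "?C p = ?C q" by (rule comp_eq[OF po pP pq(3)])
    then have pC: "p \<in> ?C q \<inter> Pm" using selfC[OF pP(1)] pq by blast
    show ?thesis
    proof (cases "minimal_in (?C q \<inter> Pm) le p")
      case True then show ?thesis using Auniq pP by blast
    next
      case False
      then have mx: "maximal_in (?C q \<inter> Pm) le p" using minmax[OF pP(2) pC] by blast
      have "le p (B q)" using po_trans[OF po, of p q "B q"] pP BP[of q] Bge[of q] pq by blast
      moreover have "B q \<in> ?C q \<inter> Pm" using Bmax[OF pP(2)] unfolding maximal_in_def by blast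
      ultimately have "B q = p" using mx unfolding maximal_in_def by blast
      then have "le q p" using Bge[OF pP(2)] by simp
      then have "q = p" using po_antisym[OF po, of q p] pP pq by blast
      then show ?thesis using pq by blast
    qed
  qed
  have above: "q = B p" if pq: "q \<in> Pm" "p \<in> ?U" "le p q" for p q
  proof -
    have pP: "p \<in> P" "q \<in> P" using pq PmP by blast+
    have "?C p = ?C q" by (rule comp_eq[OF po pP pq(3)])
    then have pC: "q \<in> ?C p \<inter> Pm" using selfC[OF pP(2)] pq by blast
    show ?thesis
    proof (cases "maximal_in (?C p \<inter> Pm) le q")
      case True then show ?thesis using Buniq pP by blast
    next
      case False
      then have mn: "minimal_in (?C p \<inter> Pm) le q" using minmax[OF pP(1) pC] by blast
      have "le (A p) q" using po_trans[OF po, of "A p" p q] pP AP[of p] Ale[of p] pq by blast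
      moreover have "A p \<in> ?C p \<inter> Pm" using Amin[OF pP(1)] unfolding minimal_in_def by blast
      ultimately have "A p = q" using mn unfolding minimal_in_def by blast
      then have "le q p" using Ale[OF pP(1)] by simp
      then have "q = p" using po_antisym[OF po, of q p] pP pq by blast
      then show ?thesis using pq by blast
    qed
  qed
  obtain g :: "'a \<Rightarrow> nat" and n where g: "g ` ?U = {i. i < n}" "inj_on g ?U"
    using finite_imp_inj_to_nat_seg[of ?U] finP by blast
  define Q where "Q = g ` ?U"
  define h where "h = inv_into ?U g"
  have hg: "\<And>p. p \<in> ?U \<Longrightarrow> h (g p) = p" unfolding h_def using g(2) by (simp add: inv_into_f_f)
  have gh: "\<And>i. i \<in> Q \<Longrightarrow> g (h i) = i" unfolding h_def Q_def by (simp add: f_inv_into_f)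
  have hU: "\<And>i. i \<in> Q \<Longrightarrow> h i \<in> ?U" unfolding h_def Q_def by (rule inv_into_into)
  have gQ: "\<And>p. p \<in> ?U \<Longrightarrow> g p \<in> Q" unfolding Q_def by blast
  have finU: "finite ?U" using finP by blast
  have finQ: "finite Q" unfolding Q_def using finU by blast
  define leQ where "leQ i j = le (h i) (h j)" for i j
  define al where "al p = lam (A p)" for p
  define be where "be p = lam (B p)" for p
  define d where "d p = be p - al p" for p
  have dpos: "\<And>p. p \<in> ?U \<Longrightarrow> d p > 0" unfolding d_def al_def be_def using ABlt by simp
  define M where "M q p = (if p = h q then 1 / d p else 0)" for q :: nat and p
  define c where "c q = - al (h q) / d (h q)" for q
  define N where "N p q = (if q = g p then d p else 0)" for p and q :: nat
  define f where "f x = (\<lambda>q. if q \<in> Q then (\<Sum>p\<in>?U. M q p * x p) + c q else 0)" for x :: "'a \<Rightarrow> real"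
  have fval: "f x q = (x (h q) - al (h q)) / d (h q)" if q: "q \<in> Q" for x q
  proof -
    have "(\<Sum>p\<in>?U. M q p * x p) = (\<Sum>p\<in>?U. if p = h q then x p / d p else 0)"
      by (rule sum.cong) (auto simp: M_def)
    also have "\<dots> = x (h q) / d (h q)" using hU[OF q] finU by simp
    finally show ?thesis unfolding f_def c_def using q by (simp add: diff_divide_distrib)
  qed
  have fout: "\<And>x q. q \<notin> Q \<Longrightarrow> f x q = 0" unfolding f_def by simp
  have poQ: "is_poset Q leQ"
    unfolding is_poset_def
  proof (intro conjI ballI impI)
    show "finite Q" by (rule finQ)
  next
    fix x assume "x \<in> Q" then show "leQ x x" unfolding leQ_def using hU po_refl[OF po] by blast
  next
    fix x y assume "x \<in> Q" "y \<in> Q" "leQ x y \<and> leQ y x"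
    then have "h x = h y" unfolding leQ_def using hU po_antisym[OF po, of "h x" "h y"] by blast
    then show "x = y" using gh \<open>x \<in> Q\<close> \<open>y \<in> Q\<close> by metis
  next
    fix x y z assume "x \<in> Q" "y \<in> Q" "z \<in> Q" "leQ x y \<and> leQ y z"
    then show "leQ x z" unfolding leQ_def using hU po_trans[OF po, of "h x" "h y" "h z"] by blast
  qed
  have s1: "\<forall>q\<in>Q. \<forall>q'\<in>Q. (\<Sum>p\<in>?U. M q p * N p q') = (if q = q' then 1 else 0)"
  proof (intro ballI)
    fix q q' assume q: "q \<in> Q" and q': "q' \<in> Q"
    have "(\<Sum>p\<in>?U. M q p * N p q') = (\<Sum>p\<in>?U. if p = h q then N p q' / d p else 0)"
      by (rule sum.cong) (auto simp: M_def)
    also have "\<dots> = N (h q) q' / d (h q)" using hU[OF q] finU by simp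
    also have "\<dots> = (if q = q' then 1 else 0)"
      unfolding N_def using gh[OF q] dpos[OF hU[OF q]] by auto
    finally show "(\<Sum>p\<in>?U. M q p * N p q') = (if q = q' then 1 else 0)" .
  qed
  have s2: "\<forall>p\<in>?U. \<forall>p'\<in>?U. (\<Sum>q\<in>Q. N p q * M q p') = (if p = p' then 1 else 0)"
  proof (intro ballI)
    fix p p' assume p: "p \<in> ?U" and p': "p' \<in> ?U"
    have "(\<Sum>q\<in>Q. N p q * M q p') = (\<Sum>q\<in>Q. if q = g p then d p * M q p' else 0)"
      by (rule sum.cong) (auto simp: N_def)
    also have "\<dots> = d p * M (g p) p'" using gQ[OF p] finQ by simp
    also have "\<dots> = (if p = p' then 1 else 0)"
      unfolding M_def using hg[OF p] dpos[OF p] by auto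
    finally show "(\<Sum>q\<in>Q. N p q * M q p') = (if p = p' then 1 else 0)" .
  qed
  have img: "f ` marked_order_polytope P le Pm lam = order_polytope Q leQ"
  proof
    show "f ` marked_order_polytope P le Pm lam \<subseteq> order_polytope Q leQ"
    proof
      fix z assume "z \<in> f ` marked_order_polytope P le Pm lam"
      then obtain x where x: "x \<in> marked_order_polytope P le Pm lam" and z: "z = f x" by blast
      have xc: "\<And>p q. p \<in> P \<Longrightarrow> q \<in> P \<Longrightarrow> le p q \<Longrightarrow>
          (if p \<in> Pm then lam p else x p) \<le> (if q \<in> Pm then lam q else x q)"
        using x unfolding marked_order_polytope_def by blast
      have lo: "al p \<le> x p" if p: "p \<in> ?U" for p
        using xc[of "A p" p] AP[of p] Ale[of p] p unfolding al_def by auto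
      have hi: "x p \<le> be p" if p: "p \<in> ?U" for p
        using xc[of p "B p"] BP[of p] Bge[of p] p unfolding be_def by auto
      show "z \<in> order_polytope Q leQ"
        unfolding order_polytope_def
      proof (intro CollectI conjI allI impI ballI)
        fix q assume "q \<notin> Q" then show "z q = 0" using z fout by simp
      next
        fix q assume q: "q \<in> Q"
        show "0 \<le> z q" using z fval[OF q] lo[OF hU[OF q]] dpos[OF hU[OF q]] by simp
        show "z q \<le> 1" using z fval[OF q] hi[OF hU[OF q]] dpos[OF hU[OF q]]
          by (simp add: divide_le_eq d_def)
      next
        fix i j assume i: "i \<in> Q" and j: "j \<in> Q" and ij: "leQ i j \<and> i \<noteq> j"
        have lij: "le (h i) (h j)" using ij unfolding leQ_def by blast
        have ab: "A (h i) = A (h j) \<and> B (h i) = B (h j)" using sameAB[OF _ _ lij] hU[OF i] hU[OF j] by blast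
        have "x (h i) \<le> x (h j)" using xc[OF _ _ lij] hU[OF i] hU[OF j] by auto
        then have "(x (h i) - al (h i)) / d (h i) \<le> (x (h j) - al (h j)) / d (h j)"
          using ab dpos[OF hU[OF i]] unfolding d_def al_def be_def by (simp add: divide_right_mono)
        then show "z i \<le> z j" using z fval[OF i] fval[OF j] by simp
      qed
    qed
  next
    show "order_polytope Q leQ \<subseteq> f ` marked_order_polytope P le Pm lam"
    proof
      fix y assume y: "y \<in> order_polytope Q leQ"
      have y0: "\<And>q. q \<notin> Q \<Longrightarrow> y q = 0" and y01: "\<And>q. q \<in> Q \<Longrightarrow> 0 \<le> y q \<and> y q \<le> 1"
        and ymono: "\<And>i j. i \<in> Q \<Longrightarrow> j \<in> Q \<Longrightarrow> leQ i j \<Longrightarrow> i \<noteq> j \<Longrightarrow> y i \<le> y j"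
        using y unfolding order_polytope_def by blast+
      define x where "x p = (if p \<in> ?U then al p + d p * y (g p) else 0)" for p
      have "y = f x"
      proof
        fix q show "y q = f x q"
        proof (cases "q \<in> Q")
          case True
          have "f x q = (d (h q) * y q) / d (h q)"
            using fval[OF True] hU[OF True] gh[OF True] unfolding x_def by simp
          then show ?thesis using dpos[OF hU[OF True]] by simp
        next
          case False then show ?thesis using y0 fout by simp
        qed
      qed
      moreover have "x \<in> marked_order_polytope P le Pm lam"
        unfolding marked_order_polytope_def
      proof (intro CollectI conjI allI impI ballI)
        fix p assume "p \<notin> ?U" then show "x p = 0" unfolding x_def by auto
      next
        fix p q assume p: "p \<in> P" and q: "q \<in> P" and pq: "le p q"
        show "(if p \<in> Pm then lam p else x p) \<le> (if q \<in> Pm then lam q else x q)"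
        proof (cases "p \<in> Pm"; cases "q \<in> Pm")
          assume "p \<in> Pm" "q \<in> Pm" then show ?thesis using lammono pq by simp
        next
          assume pm: "p \<in> Pm" and qm: "q \<notin> Pm"
          then have qU: "q \<in> ?U" using q by blast
          have "p = A q" by (rule below[OF pm qU pq])
          moreover have "0 \<le> d q * y (g q)" using dpos[OF qU] y01[OF gQ[OF qU]] by simp
          ultimately show ?thesis using pm qm qU unfolding x_def al_def by simp
        next
          assume pm: "p \<notin> Pm" and qm: "q \<in> Pm"
          then have pU: "p \<in> ?U" using p by blast
          have "q = B p" by (rule above[OF qm pU pq])
          moreover have "d p * y (g p) \<le> d p" using dpos[OF pU] y01[OF gQ[OF pU]]
            by (simp add: mult_left_le)
          ultimately show ?thesis using pm qm pU unfolding x_def be_def d_def by simp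
        next
          assume pm: "p \<notin> Pm" and qm: "q \<notin> Pm"
          then have pU: "p \<in> ?U" and qU: "q \<in> ?U" using p q by blast+
          have ab: "A p = A q \<and> B p = B q" by (rule sameAB[OF p q pq])
          show ?thesis
          proof (cases "p = q")
            case True then show ?thesis by simp
          next
            case False
            have "leQ (g p) (g q)" unfolding leQ_def using hg[OF pU] hg[OF qU] pq by simp
            moreover have "g p \<noteq> g q" using False hg[OF pU] hg[OF qU] by metis
            ultimately have "y (g p) \<le> y (g q)" using ymono gQ[OF pU] gQ[OF qU] by blast
            then have "d p * y (g p) \<le> d p * y (g q)" using dpos[OF pU] by simp
            then show ?thesis using pm qm pU qU ab unfolding x_def al_def be_def d_def by simp
          qed
        qed
      qed
      ultimately show "y \<in> f ` marked_order_polytope P le Pm lam" by blast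
    qed
  qed
  show ?thesis
  proof (intro exI conjI)
    show "is_poset Q leQ" by (rule poQ)
    show "affinely_isomorphic ?U Q (marked_order_polytope P le Pm lam) (order_polytope Q leQ)"
      unfolding affinely_isomorphic_def
    proof (intro exI conjI)
      show "\<forall>q\<in>Q. \<forall>q'\<in>Q. (\<Sum>p\<in>?U. M q p * N p q') = (if q = q' then 1 else 0)" by (rule s1)
      show "\<forall>p\<in>?U. \<forall>p'\<in>?U. (\<Sum>q\<in>Q. N p q * M q p') = (if p = p' then 1 else 0)" by (rule s2)
      show "(\<lambda>x q. if q \<in> Q then (\<Sum>p\<in>?U. M q p * x p) + c q else 0) ` marked_order_polytope P le Pm lam
          = order_polytope Q leQ" using img unfolding f_def .
    qed
  qed
qed

end
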